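(* Consider the problem, algorithm and notation described in the context, with each $f_i$ convex and $l$-smooth, and DCGS run with parameters $\theta_k=\alpha_k=1$, $\eta_k=2\|L\|$, $\tau_k=\|L\|$, $e_i^k=\frac{\|L\|\max(\|\mathbf{x}^0-\mathbf{x}^*\|^2,\|\mathbf{y}^0\|^2)}{mN}$. Then to obtain an output with $F(\overline{\mathbf{x}}_N)-F(\mathbf{x}^* )\le\epsilon$, the number of communication rounds and the number of LO calls performed by each agent are respectively bounded by $$\mathcal{O}\left(\frac{\|L\|\max(\|\mathbf{x}^0-\mathbf{x}^*\|^2,\|\mathbf{y}^0\|^2)}{\epsilon}\right)\quad\text{and}\quad \mathcal{O}\left(\frac{m\|L\|(l+\|L\|)\max(\|\mathbf{x}^0-\mathbf{x}^*\|^2,\|\mathbf{y}^0\|^2)}{\epsilon^2}\right).$$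
   Context: Let $G=(V,E)$ be a connected undirected graph with $V=\{1,\dots,m\}$ and $N(i)=\{j:(i,j)\in E\}$. Its Laplacian $L\in\mathbb{R}^{m\times m}$ has $L_{ii}=|N(i)|$, $L_{ij}=-1$ if $i\ne j$ and $(i,j)\in E$, and $L_{ij}=0$ otherwise; $\|L\|$ is its spectral norm. Agent $i$ holds $f_i:\mathbb{R}^d\to\mathbb{R}$; each $f_i$ is $u$-strongly convex ($u\ge 0$) and $l$-smooth, i.e. $\frac{u}{2}\|y-x\|^2\le f_i(y)-f_i(x)-\nabla f_i(x)^T(y-x)\le\frac{l}{2}\|y-x\|^2$. $X\subset\mathbb{R}^d$ is a nonempty compact convex set accessed through a linear oracle (LO) returning $\arg\min_{s\in X}\langle g,s\rangle$. For $\mathbf{x}=(x_1,\dots,x_m)\in X^m$ let $F(\mathbf{x})=\sum_{i=1}^m f_i(x_i)$, and let $\mathbf{x}^*$ be an optimal solution of $\min_{\mathbf{x}\in X^m}F(\mathbf{x})$ subject to $(L\otimes I_d)\mathbf{x}=0$. All norms on $\mathbb{R}^{md}$ are Euclidean. Procedure $CG(f,x,w,\eta,e)$ (Frank–Wolfe on $\phi(z)=\langle w,z\rangle+f(z)+\frac{\eta}{2}\|z-x\|^2$ over $X$): pick $z^0\in X$; for $t=0,1,\dots$: let $g^t=\nabla f(z^t)+w+\eta(z^t-x)$ and $s^t=\arg\min_{s\in X}\langle g^t,s\rangle$ (one LO call); if $\langle g^t,z^t-s^t\rangle\le e$ return $z^t$; otherwise $z^{t+1}=(1-\gamma_t)z^t+\gamma_t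 s^t$ with $\gamma_t=\frac{2}{t+2}$ or chosen by line search. Algorithm DCGS: given $N$, $\mathbf{x}^0=\mathbf{x}^{-1}\in X^m$, $\mathbf{y}^0\in\mathbb{R}^{md}$ and parameters $\{\alpha_k\},\{\tau_k\},\{\eta_k\},\{\theta_k\},\{e_i^k\}$. For $k=1,\dots,N$, every agent $i$ computes: $\tilde x_i^k=\alpha_k(x_i^{k-1}-x_i^{k-2})+x_i^{k-1}$ and broadcasts it to its neighbors; $v_i^k=\sum_{j\in N(i)\cup\{i\}}L_{ij}\tilde x_j^k$; $y_i^k=y_i^{k-1}+\frac{1}{\tau_k}v_i^k$ and broadcasts it to its neighbors; $w_i^k=\sum_{j\in N(i)\cup\{i\}}L_{ij}y_j^k$; $x_i^k=CG(f_i,x_i^{k-1},w_i^k,\eta_k,e_i^k)$. Thus each outer iteration uses a constant number (two) of communication rounds. Output $\overline{\mathbf{x}}_N=(\sum_{k=1}^N\theta_k)^{-1}\sum_{k=1}^N\theta_k\mathbf{x}^k$. *)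

theory Defs
  imports "HOL-Analysis.Analysis"
begin

definition simple_graph_on :: "nat \<Rightarrow> (nat \<Rightarrow> nat \<Rightarrow> bool) \<Rightarrow> bool" where
  "simple_graph_on m E \<longleftrightarrow>
     (\<forall>i j. E i j \<longrightarrow> i \<in> {1..m} \<and> j \<in> {1..m}) \<and>
     (\<forall>i j. E i j \<longleftrightarrow> E j i) \<and> (\<forall>i. \<not> E i i)"

definition graph_connected :: "nat \<Rightarrow> (nat \<Rightarrow> nat \<Rightarrow> bool) \<Rightarrow> bool" where
  "graph_connected m E \<longleftrightarrow> (\<forall>i\<in>{1..m}. \<forall>j\<in>{1..m}. (i, j) \<in> {(a, b). E a b}\<^sup>*)"

definition laplacian :: "nat \<Rightarrow> (nat \<Rightarrow> nat \<Rightarrow> bool) \<Rightarrow> nat \<Rightarrow> nat \<Rightarrow> real" where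
  "laplacian m E i j =
     (if i = j then real (card {k\<in>{1..m}. E i k}) else if E i j then -1 else 0)"

definition vnorm :: "nat \<Rightarrow> (nat \<Rightarrow> real) \<Rightarrow> real" where
  "vnorm m v = sqrt (\<Sum>i=1..m. (v i)\<^sup>2)"

definition lap_norm :: "nat \<Rightarrow> (nat \<Rightarrow> nat \<Rightarrow> bool) \<Rightarrow> real" where
  "lap_norm m E = Sup {vnorm m (\<lambda>i. \<Sum>j=1..m. laplacian m E i j * v j) | v. vnorm m v \<le> 1}"

(* Euclidean norm on R^{md} of a stacked vector x = (x_1,...,x_m), x_i in R^d *)
definition snorm :: "nat \<Rightarrow> (nat \<Rightarrow> 'a::euclidean_space) \<Rightarrow> real" where
  "snorm m x = sqrt (\<Sum>i=1..m. (norm (x i))\<^sup>2)"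

definition Ftot :: "nat \<Rightarrow> (nat \<Rightarrow> 'a::euclidean_space \<Rightarrow> real) \<Rightarrow> (nat \<Rightarrow> 'a) \<Rightarrow> real" where
  "Ftot m f x = (\<Sum>i=1..m. f i (x i))"

(* (L \<otimes> I_d) x, block i *)
definition lap_apply :: "nat \<Rightarrow> (nat \<Rightarrow> nat \<Rightarrow> bool) \<Rightarrow> (nat \<Rightarrow> 'a::euclidean_space) \<Rightarrow> nat \<Rightarrow> 'a" where
  "lap_apply m E x i = (\<Sum>j=1..m. laplacian m E i j *\<^sub>R x j)"

definition is_opt_sol :: "nat \<Rightarrow> (nat \<Rightarrow> nat \<Rightarrow> bool) \<Rightarrow> (nat \<Rightarrow> 'a::euclidean_space \<Rightarrow> real)
    \<Rightarrow> 'a set \<Rightarrow> (nat \<Rightarrow> 'a) \<Rightarrow> bool" where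
  "is_opt_sol m E f X xs \<longleftrightarrow>
     (\<forall>i\<in>{1..m}. xs i \<in> X) \<and> (\<forall>i\<in>{1..m}. lap_apply m E xs i = 0) \<and>
     (\<forall>x. (\<forall>i\<in>{1..m}. x i \<in> X) \<and> (\<forall>i\<in>{1..m}. lap_apply m E x i = 0)
          \<longrightarrow> Ftot m f xs \<le> Ftot m f x)"

definition lin_oracle :: "'a::euclidean_space set \<Rightarrow> 'a \<Rightarrow> 'a \<Rightarrow> bool" where
  "lin_oracle X g s \<longleftrightarrow> s \<in> X \<and> (\<forall>s'\<in>X. g \<bullet> s \<le> g \<bullet> s')"

(* gradient of phi(z) = <w,z> + f(z) + eta/2 ||z - xc||^2 *)
definition cg_grad :: "('a::euclidean_space \<Rightarrow> 'a) \<Rightarrow> 'a \<Rightarrow> 'a \<Rightarrow> real \<Rightarrow> 'a \<Rightarrow> 'a" where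
  "cg_grad gf xc w eta z = gf z + w + eta *\<^sub>R (z - xc)"

definition cg_gap :: "('a::euclidean_space \<Rightarrow> 'a) \<Rightarrow> 'a \<Rightarrow> 'a \<Rightarrow> real \<Rightarrow> 'a \<Rightarrow> 'a \<Rightarrow> real" where
  "cg_gap gf xc w eta z s = cg_grad gf xc w eta z \<bullet> (z - s)"

(* An (infinitely continued) trace (z^t, s^t) of procedure CG(f, xc, w, eta, e):
   z^0 in X arbitrary, s^t any LO answer, and the step size either 2/(t+2)
   (ls = False) or by exact line search on [0,1] (ls = True).
   The procedure itself stops at the first t with gap <= e (see cg_stop). *)
definition cg_trace :: "('a::euclidean_space \<Rightarrow> real) \<Rightarrow> ('a \<Rightarrow> 'a) \<Rightarrow> 'a set \<Rightarrow> 'a \<Rightarrow> 'a \<Rightarrow> real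
    \<Rightarrow> bool \<Rightarrow> (nat \<Rightarrow> 'a) \<Rightarrow> (nat \<Rightarrow> 'a) \<Rightarrow> bool" where
  "cg_trace f gf X xc w eta ls z s \<longleftrightarrow>
     (let phi = (\<lambda>u. w \<bullet> u + f u + eta / 2 * (norm (u - xc))\<^sup>2) in
      z 0 \<in> X \<and>
      (\<forall>t. lin_oracle X (cg_grad gf xc w eta (z t)) (s t)) \<and>
      (\<forall>t. if ls then
              (\<exists>\<gamma>\<in>{0..1}. (\<forall>\<gamma>'\<in>{0..1}.
                   phi ((1 - \<gamma>) *\<^sub>R z t + \<gamma> *\<^sub>R s t) \<le> phi ((1 - \<gamma>') *\<^sub>R z t + \<gamma>' *\<^sub>R s t)) \<and>
                 z (Suc t) = (1 - \<gamma>) *\<^sub>R z t + \<gamma> *\<^sub>R s t)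
           else z (Suc t) = (1 - 2 / (real t + 2)) *\<^sub>R z t + (2 / (real t + 2)) *\<^sub>R s t))"

(* the iteration index at which CG returns (the number of LO calls is cg_stop + 1) *)
definition cg_stop :: "('a::euclidean_space \<Rightarrow> 'a) \<Rightarrow> 'a \<Rightarrow> 'a \<Rightarrow> real \<Rightarrow> real
    \<Rightarrow> (nat \<Rightarrow> 'a) \<Rightarrow> (nat \<Rightarrow> 'a) \<Rightarrow> nat" where
  "cg_stop gf xc w eta e z s = (LEAST t. cg_gap gf xc w eta (z t) (s t) \<le> e)"

(* DCGS quantities.  x k = x^k for k >= 0, and x^{-1} = x^0 is realised by
   x (k - 2) with truncated subtraction at k = 1. *)
definition dcgs_xt :: "real \<Rightarrow> (nat \<Rightarrow> nat \<Rightarrow> 'a::euclidean_space) \<Rightarrow> nat \<Rightarrow> nat \<Rightarrow> 'a" where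
  "dcgs_xt a x k j = a *\<^sub>R (x (k - 1) j - x (k - 2) j) + x (k - 1) j"

definition dcgs_w :: "nat \<Rightarrow> (nat \<Rightarrow> nat \<Rightarrow> bool) \<Rightarrow> (nat \<Rightarrow> nat \<Rightarrow> 'a::euclidean_space) \<Rightarrow> nat \<Rightarrow> nat \<Rightarrow> 'a" where
  "dcgs_w m E y k i = lap_apply m E (y k) i"

definition dcgs_run :: "nat \<Rightarrow> (nat \<Rightarrow> nat \<Rightarrow> bool) \<Rightarrow> (nat \<Rightarrow> 'a::euclidean_space \<Rightarrow> real)
    \<Rightarrow> (nat \<Rightarrow> 'a \<Rightarrow> 'a) \<Rightarrow> 'a set \<Rightarrow> nat
    \<Rightarrow> (nat \<Rightarrow> real) \<Rightarrow> (nat \<Rightarrow> real) \<Rightarrow> (nat \<Rightarrow> real) \<Rightarrow> (nat \<Rightarrow> nat \<Rightarrow> real) \<Rightarrow> bool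
    \<Rightarrow> (nat \<Rightarrow> 'a) \<Rightarrow> (nat \<Rightarrow> 'a)
    \<Rightarrow> (nat \<Rightarrow> nat \<Rightarrow> 'a) \<Rightarrow> (nat \<Rightarrow> nat \<Rightarrow> 'a)
    \<Rightarrow> (nat \<Rightarrow> nat \<Rightarrow> nat \<Rightarrow> 'a) \<Rightarrow> (nat \<Rightarrow> nat \<Rightarrow> nat \<Rightarrow> 'a) \<Rightarrow> bool" where
  "dcgs_run m E f gf X N alpha tau eta e ls x0 y0 x y Z S \<longleftrightarrow>
     x 0 = x0 \<and> y 0 = y0 \<and>
     (\<forall>k\<in>{1..N}. \<forall>i\<in>{1..m}.
        y k i = y (k - 1) i + (1 / tau k) *\<^sub>R lap_apply m E (dcgs_xt (alpha k) x k) i \<and>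
        cg_trace (f i) (gf i) X (x (k - 1) i) (dcgs_w m E y k i) (eta k) ls (Z k i) (S k i) \<and>
        x k i = Z k i (cg_stop (gf i) (x (k - 1) i) (dcgs_w m E y k i) (eta k) (e k i) (Z k i) (S k i)))"

definition dcgs_cg_terminates :: "nat \<Rightarrow> (nat \<Rightarrow> nat \<Rightarrow> bool) \<Rightarrow> (nat \<Rightarrow> 'a::euclidean_space \<Rightarrow> 'a) \<Rightarrow> nat
    \<Rightarrow> (nat \<Rightarrow> real) \<Rightarrow> (nat \<Rightarrow> nat \<Rightarrow> real)
    \<Rightarrow> (nat \<Rightarrow> nat \<Rightarrow> 'a) \<Rightarrow> (nat \<Rightarrow> nat \<Rightarrow> 'a)
    \<Rightarrow> (nat \<Rightarrow> nat \<Rightarrow> nat \<Rightarrow> 'a) \<Rightarrow> (nat \<Rightarrow> nat \<Rightarrow> nat \<Rightarrow> 'a) \<Rightarrow> bool" where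
  "dcgs_cg_terminates m E gf N eta e x y Z S \<longleftrightarrow>
     (\<forall>k\<in>{1..N}. \<forall>i\<in>{1..m}. \<exists>t.
        cg_gap (gf i) (x (k - 1) i) (dcgs_w m E y k i) (eta k) (Z k i t) (S k i t) \<le> e k i)"

definition dcgs_lo_calls :: "nat \<Rightarrow> (nat \<Rightarrow> nat \<Rightarrow> bool) \<Rightarrow> ('a::euclidean_space \<Rightarrow> 'a) \<Rightarrow> nat \<Rightarrow> nat
    \<Rightarrow> (nat \<Rightarrow> real) \<Rightarrow> (nat \<Rightarrow> nat \<Rightarrow> real)
    \<Rightarrow> (nat \<Rightarrow> nat \<Rightarrow> 'a) \<Rightarrow> (nat \<Rightarrow> nat \<Rightarrow> 'a)
    \<Rightarrow> (nat \<Rightarrow> nat \<Rightarrow> nat \<Rightarrow> 'a) \<Rightarrow> (nat \<Rightarrow> nat \<Rightarrow> nat \<Rightarrow> 'a) \<Rightarrow> nat" where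
  "dcgs_lo_calls m E gfi i N eta e x y Z S =
     (\<Sum>k=1..N. Suc (cg_stop gfi (x (k - 1) i) (dcgs_w m E y k i) (eta k) (e k i) (Z k i) (S k i)))"

definition dcgs_output :: "nat \<Rightarrow> (nat \<Rightarrow> real) \<Rightarrow> (nat \<Rightarrow> nat \<Rightarrow> 'a::euclidean_space) \<Rightarrow> nat \<Rightarrow> 'a" where
  "dcgs_output N theta x i = (1 / (\<Sum>k=1..N. theta k)) *\<^sub>R (\<Sum>k=1..N. theta k *\<^sub>R x k i)"

end

theory Submission
  imports Defs
begin


definition ip :: "nat \<Rightarrow> (nat \<Rightarrow> 'a::real_inner) \<Rightarrow> (nat \<Rightarrow> 'a) \<Rightarrow> real" where
  "ip m u v = (\<Sum>i=1..m. u i \<bullet> v i)"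

lemma ip_sym: "ip m u v = ip m v u"
  unfolding ip_def by (simp add: inner_commute)

lemma ip_nonneg: "0 \<le> ip m u u"
  unfolding ip_def by (simp add: sum_nonneg)

lemma ip_diff_left: "ip m (\<lambda>i. u i - w i) v = ip m u v - ip m w v"
  unfolding ip_def by (simp add: inner_diff_left sum_subtractf)

lemma ip_add_left: "ip m (\<lambda>i. u i + w i) v = ip m u v + ip m w v"
  unfolding ip_def by (simp add: inner_add_left sum.distrib)

lemma ip_scale_left: "ip m (\<lambda>i. c *\<^sub>R u i) v = c * ip m u v"
  unfolding ip_def by (simp add: sum_distrib_left)

lemma ip_neg_right: "ip m u (\<lambda>i. - v i) = - ip m u v"
  unfolding ip_def by (simp add: sum_negf)

lemma ip_cong: "(\<And>i. i \<in> {1..m} \<Longrightarrow> u i = u' i) \<Longrightarrow> (\<And>i. i \<in> {1..m} \<Longrightarrow> v i = v' i) \<Longrightarrow> ip m u v = ip m u' v'"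
  unfolding ip_def by (intro sum.cong) auto

lemma snorm_sq: "(snorm m u)\<^sup>2 = ip m u u"
  unfolding snorm_def ip_def by (simp add: sum_nonneg power2_norm_eq_inner)

lemma laplacian_sym: "(\<forall>i j. E i j \<longleftrightarrow> E j i) \<Longrightarrow> laplacian m E i j = laplacian m E j i"
  unfolding laplacian_def by auto

lemma lap_sym: assumes "\<forall>i j. E i j \<longleftrightarrow> E j i"
  shows "ip m (lap_apply m E u) v = ip m u (lap_apply m E v)"
proof -
  have "ip m (lap_apply m E u) v = (\<Sum>i=1..m. \<Sum>j=1..m. laplacian m E i j * (u j \<bullet> v i))"
    unfolding ip_def lap_apply_def by (simp add: inner_sum_left)
  also have "\<dots> = (\<Sum>j=1..m. \<Sum>i=1..m. laplacian m E i j * (u j \<bullet> v i))"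
    by (rule sum.swap)
  also have "\<dots> = ip m u (lap_apply m E v)"
    unfolding ip_def lap_apply_def using laplacian_sym[OF assms]
    by (simp add: inner_sum_right inner_commute)
  finally show ?thesis .
qed

lemma lap_diff: "lap_apply m E (\<lambda>i. u i - w i) i = lap_apply m E u i - lap_apply m E w i"
  unfolding lap_apply_def by (simp add: scaleR_diff_right sum_subtractf)

lemma lap_add: "lap_apply m E (\<lambda>i. u i + w i) i = lap_apply m E u i + lap_apply m E w i"
  unfolding lap_apply_def by (simp add: scaleR_add_right sum.distrib)

lemma lap_zero: "lap_apply m E (\<lambda>i. 0) i = 0"
  unfolding lap_apply_def by simp



lemma vnorm_scale: "vnorm m (\<lambda>i. c * v i) = \<bar>c\<bar> * vnorm m v"
proof -
  have "(\<Sum>i=1..m. (c * v i)\<^sup>2) = c\<^sup>2 * (\<Sum>i=1..m. (v i)\<^sup>2)"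
    by (simp add: sum_distrib_left power_mult_distrib)
  then show ?thesis unfolding vnorm_def by (simp add: real_sqrt_mult)
qed

lemma vnorm_sq: "(vnorm m v)\<^sup>2 = (\<Sum>i=1..m. (v i)\<^sup>2)"
  unfolding vnorm_def by (simp add: sum_nonneg)

lemma vnorm_nonneg: "0 \<le> vnorm m v"
  unfolding vnorm_def by (simp add: sum_nonneg)

lemma lap_entry_bound: "\<bar>laplacian m E i j\<bar> \<le> real m + 1"
proof -
  have "card {k\<in>{1..m}. E i k} \<le> card {1..m}" by (rule card_mono) auto
  then show ?thesis unfolding laplacian_def by auto
qed

lemma lapvec_bdd: "bdd_above {vnorm m (\<lambda>i. \<Sum>j=1..m. laplacian m E i j * v j) | v. vnorm m v \<le> 1}"
proof -
  have "vnorm m (\<lambda>i. \<Sum>j=1..m. laplacian m E i j * v j) \<le> sqrt (real m * (real m * (real m + 1))\<^sup>2)"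
    if v: "vnorm m v \<le> 1" for v
  proof -
    have vj: "\<bar>v j\<bar> \<le> 1" if "j \<in> {1..m}" for j
    proof -
      have "(v j)\<^sup>2 \<le> (\<Sum>i=1..m. (v i)\<^sup>2)"
        by (rule member_le_sum) (use that in auto)
      also have "\<dots> = (vnorm m v)\<^sup>2" by (simp add: vnorm_sq)
      also have "\<dots> \<le> 1" using v vnorm_nonneg[of m v] by (simp add: power_le_one)
      finally show ?thesis using abs_le_square_iff[of "v j" 1] by simp
    qed
    have ri: "\<bar>\<Sum>j=1..m. laplacian m E i j * v j\<bar> \<le> real m * (real m + 1)" for i
    proof -
      have "\<bar>\<Sum>j=1..m. laplacian m E i j * v j\<bar> \<le> (\<Sum>j=1..m. \<bar>laplacian m E i j * v j\<bar>)"
        by (rule sum_abs)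
      also have "\<dots> \<le> (\<Sum>j=1..m. real m + 1)"
      proof (rule sum_mono)
        fix j assume "j \<in> {1..m}"
        then have "\<bar>v j\<bar> \<le> 1" by (rule vj)
        then show "\<bar>laplacian m E i j * v j\<bar> \<le> real m + 1"
          unfolding abs_mult using mult_mono[OF lap_entry_bound[of m E i j] \<open>\<bar>v j\<bar> \<le> 1\<close>] by simp
      qed
      finally show ?thesis by simp
    qed
    have "(\<Sum>i=1..m. (\<Sum>j=1..m. laplacian m E i j * v j)\<^sup>2) \<le> (\<Sum>i=1..m. (real m * (real m + 1))\<^sup>2)"
      by (rule sum_mono) (use ri in \<open>simp add: abs_le_square_iff[symmetric]\<close>)
    then show ?thesis unfolding vnorm_def by simp
  qed
  then show ?thesis unfolding bdd_above_def by blast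
qed

lemma lap_norm_bound: "vnorm m (\<lambda>i. \<Sum>j=1..m. laplacian m E i j * v j) \<le> lap_norm m E * vnorm m v"
proof (cases "vnorm m v = 0")
  case True
  then have "(\<Sum>i=1..m. (v i)\<^sup>2) = 0" using vnorm_sq[of m v] by simp
  then have "\<forall>i\<in>{1..m}. (v i)\<^sup>2 = 0" by (subst (asm) sum_nonneg_eq_0_iff) auto
  then have "\<forall>i\<in>{1..m}. v i = 0" by simp
  then have "(\<lambda>i. \<Sum>j=1..m. laplacian m E i j * v j) = (\<lambda>i. 0)" by simp
  then show ?thesis using True by (simp add: vnorm_def)
next
  case False
  define c where "c = vnorm m v"
  have c: "c > 0" using False vnorm_nonneg[of m v] unfolding c_def by simp
  define w where "w = (\<lambda>i. (1/c) * v i)"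
  have "vnorm m w = 1" unfolding w_def vnorm_scale using c c_def by simp
  then have "vnorm m (\<lambda>i. \<Sum>j=1..m. laplacian m E i j * w j) \<le> lap_norm m E"
    unfolding lap_norm_def by (intro cSup_upper lapvec_bdd) auto
  moreover have eq1: "(\<lambda>i. \<Sum>j=1..m. laplacian m E i j * w j) = (\<lambda>i. (1/c) * (\<Sum>j=1..m. laplacian m E i j * v j))"
    unfolding w_def sum_distrib_left by (rule ext, rule sum.cong, simp, simp only: mult.left_commute)
  moreover have eq2: "vnorm m (\<lambda>i. (1/c) * (\<Sum>j=1..m. laplacian m E i j * v j)) = (1/c) * vnorm m (\<lambda>i. \<Sum>j=1..m. laplacian m E i j * v j)"
    by (simp only: vnorm_scale) (use c in simp)
  ultimately have "(1/c) * vnorm m (\<lambda>i. \<Sum>j=1..m. laplacian m E i j * v j) \<le> lap_norm m E"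
    by (simp only: eq1 eq2)
  then show ?thesis using c unfolding c_def[symmetric] by (simp add: field_simps)
qed

lemma inner_sq_basis: "(x::'a::euclidean_space) \<bullet> x = (\<Sum>b\<in>Basis. (x \<bullet> b)\<^sup>2)"
  by (subst euclidean_inner) (simp add: power2_eq_square)

lemma lap_sq_bound:
  fixes u :: "nat \<Rightarrow> 'a::euclidean_space"
  shows "ip m (lap_apply m E u) (lap_apply m E u) \<le> (lap_norm m E)\<^sup>2 * ip m u u"
proof -
  let ?L = "lap_norm m E"
  define w where "w = (\<lambda>b j. u j \<bullet> b)"
  have comp: "lap_apply m E u i \<bullet> b = (\<Sum>j=1..m. laplacian m E i j * w b j)" for i b
    unfolding lap_apply_def w_def by (simp add: inner_sum_left)
  have "ip m (lap_apply m E u) (lap_apply m E u) = (\<Sum>i=1..m. \<Sum>b\<in>Basis. (lap_apply m E u i \<bullet> b)\<^sup>2)"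
    unfolding ip_def by (simp add: inner_sq_basis)
  also have "\<dots> = (\<Sum>b\<in>(Basis::'a set). \<Sum>i=1..m. (\<Sum>j=1..m. laplacian m E i j * w b j)\<^sup>2)"
    by (subst sum.swap) (simp add: comp)
  also have "\<dots> = (\<Sum>b\<in>(Basis::'a set). (vnorm m (\<lambda>i. \<Sum>j=1..m. laplacian m E i j * w b j))\<^sup>2)"
    by (simp add: vnorm_sq)
  also have "\<dots> \<le> (\<Sum>b\<in>(Basis::'a set). ?L\<^sup>2 * (vnorm m (w b))\<^sup>2)"
  proof (rule sum_mono)
    fix b :: 'a
    have "vnorm m (\<lambda>i. \<Sum>j=1..m. laplacian m E i j * w b j) \<le> ?L * vnorm m (w b)"
      by (rule lap_norm_bound)
    then have "(vnorm m (\<lambda>i. \<Sum>j=1..m. laplacian m E i j * w b j))\<^sup>2 \<le> (?L * vnorm m (w b))\<^sup>2"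
      by (rule power_mono) (rule vnorm_nonneg)
    then show "(vnorm m (\<lambda>i. \<Sum>j=1..m. laplacian m E i j * w b j))\<^sup>2 \<le> ?L\<^sup>2 * (vnorm m (w b))\<^sup>2"
      by (simp add: power_mult_distrib)
  qed
  also have "\<dots> = ?L\<^sup>2 * (\<Sum>b\<in>(Basis::'a set). \<Sum>j=1..m. (u j \<bullet> b)\<^sup>2)"
    by (simp add: vnorm_sq sum_distrib_left w_def)
  also have "\<dots> = ?L\<^sup>2 * ip m u u"
    unfolding ip_def by (subst sum.swap) (simp add: inner_sq_basis)
  finally show ?thesis .
qed

lemma inner_amgm:
  fixes p q :: "'a::real_inner"
  assumes "L > 0"
  shows "p \<bullet> q \<le> (p \<bullet> p) / (2 * L) + L / 2 * (q \<bullet> q)"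
proof -
  have "0 \<le> (p - L *\<^sub>R q) \<bullet> (p - L *\<^sub>R q)" by simp
  then have "0 \<le> p \<bullet> p - 2 * L * (p \<bullet> q) + L * L * (q \<bullet> q)"
    by (simp add: inner_diff_left inner_diff_right inner_commute algebra_simps)
  then show ?thesis using assms by (simp add: field_simps)
qed

lemma lap_bilin_bound:
  fixes u v :: "nat \<Rightarrow> 'a::euclidean_space"
  assumes L: "lap_norm m E > 0"
  shows "ip m (lap_apply m E u) v \<le> lap_norm m E / 2 * (ip m u u + ip m v v)"
proof -
  let ?L = "lap_norm m E"
  have "ip m (lap_apply m E u) v \<le> (\<Sum>i=1..m. (lap_apply m E u i \<bullet> lap_apply m E u i) / (2 * ?L) + ?L / 2 * (v i \<bullet> v i))"
    unfolding ip_def by (rule sum_mono) (rule inner_amgm[OF L])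
  also have "\<dots> = ip m (lap_apply m E u) (lap_apply m E u) / (2 * ?L) + ?L / 2 * ip m v v"
    unfolding ip_def by (simp add: sum.distrib sum_divide_distrib sum_distrib_left)
  also have "\<dots> \<le> (?L\<^sup>2 * ip m u u) / (2 * ?L) + ?L / 2 * ip m v v"
    using lap_sq_bound[of m E u] L by (simp add: divide_right_mono)
  also have "\<dots> = ?L / 2 * (ip m u u + ip m v v)"
    using L by (simp add: field_simps power2_eq_square)
  finally show ?thesis .
qed



lemma lap_norm_ge1:
  assumes m: "m \<ge> 2" and sg: "simple_graph_on m E" and con: "graph_connected m E"
  shows "lap_norm m E \<ge> 1"
proof -
  have "(1::nat, 2::nat) \<in> {(a, b). E a b}\<^sup>*" using con m unfolding graph_connected_def by auto
  then obtain c where "(1, c) \<in> {(a, b). E a b}"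
    by (cases rule: converse_rtranclE) auto
  then have E1c: "E 1 c" by simp
  then have c: "c \<in> {1..m}" using sg unfolding simple_graph_on_def by blast
  have "card {k\<in>{1..m}. E 1 k} \<noteq> 0" using c E1c by (subst card_0_eq) auto
  then have "1 \<le> card {k\<in>{1..m}. E 1 k}" by linarith
  then have "(1::real) \<le> real (card {k\<in>{1..m}. E 1 k})" by simp
  then have deg: "1 \<le> laplacian m E 1 1" unfolding laplacian_def by simp
  define v where "v = (\<lambda>j::nat. if j = 1 then (1::real) else 0)"
  have one: "1 \<in> {1..m}" using m by simp
  have "(\<Sum>i=1..m. (v i)\<^sup>2) = (\<Sum>i=1..m. if i = 1 then 1 else 0)"
    by (rule sum.cong) (auto simp: v_def)
  also have "\<dots> = 1" using one by (simp only: sum.delta finite_atLeastAtMost if_True)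
  finally have vn: "vnorm m v = 1" unfolding vnorm_def by simp
  have Lv1: "(\<Sum>j=1..m. laplacian m E 1 j * v j) = laplacian m E 1 1"
  proof -
    have "(\<Sum>j=1..m. laplacian m E 1 j * v j) = (\<Sum>j=1..m. if j = 1 then laplacian m E 1 j else 0)"
      by (rule sum.cong) (auto simp: v_def)
    also have "\<dots> = laplacian m E 1 1" using one by (simp only: sum.delta finite_atLeastAtMost if_True)
    finally show ?thesis .
  qed
  have "(\<Sum>j=1..m. laplacian m E 1 j * v j)\<^sup>2 \<le> (\<Sum>i=1..m. (\<Sum>j=1..m. laplacian m E i j * v j)\<^sup>2)"
    by (rule member_le_sum[OF _ _ finite_atLeastAtMost, where i=1 and f="\<lambda>i. (\<Sum>j=1..m. laplacian m E i j * v j)\<^sup>2"]) (use one in auto)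
  then have "(laplacian m E 1 1)\<^sup>2 \<le> (vnorm m (\<lambda>i. \<Sum>j=1..m. laplacian m E i j * v j))\<^sup>2"
    by (simp only: vnorm_sq Lv1[symmetric])
  then have "laplacian m E 1 1 \<le> vnorm m (\<lambda>i. \<Sum>j=1..m. laplacian m E i j * v j)"
    by (rule power2_le_imp_le) (simp_all add: vnorm_nonneg)
  also have "\<dots> \<le> lap_norm m E" using lap_norm_bound[of m E v] vn by simp
  finally show ?thesis using deg by simp
qed



lemma arith0:
  fixes a C :: real assumes "a > 0"
  shows "(1 - 2/a) * (2*C/a) + (2/a)\<^sup>2 * C / 2 = 2*C*(a-1)/a\<^sup>2"
  using assms by (simp add: field_simps power2_eq_square)

lemma arith1:
  fixes r C :: real assumes "0 \<le> r" "0 \<le> C"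
  shows "(1 - 2/(r+3)) * (2*C/(r+3)) + (2/(r+3))\<^sup>2 * C / 2 \<le> 2*C/(r+4)"
proof -
  have eq: "(1 - 2/(r+3)) * (2*C/(r+3)) + (2/(r+3))\<^sup>2 * C / 2 = 2*C*((r+3)-1)/(r+3)\<^sup>2"
    by (rule arith0) (use assms in simp)
  have ineq: "(r+2)*(r+4) \<le> (r+3)*(r+3)" by (simp add: algebra_simps)
  have p1: "0 < (r+3)*(r+3)" "0 < r+4" using assms by auto
  have "(r+2)/((r+3)*(r+3)) \<le> 1/(r+4)"
  proof -
    have "(r+2) \<le> ((r+3)*(r+3))/(r+4)" using ineq by (simp add: pos_le_divide_eq[OF p1(2)])
    then have "(r+2) \<le> (1/(r+4)) * ((r+3)*(r+3))" by simp
    then show ?thesis by (simp add: pos_divide_le_eq[OF p1(1)])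
  qed
  then have "C * ((r+2)/((r+3)*(r+3))) \<le> C * (1/(r+4))" by (rule mult_left_mono) (use assms in simp_all)
  moreover have "2*C*((r+3)-1)/(r+3)\<^sup>2 = 2*(C*((r+2)/((r+3)*(r+3))))"
    by (simp add: power2_eq_square algebra_simps)
  moreover have "2*C/(r+4) = 2*(C*(1/(r+4)))" by simp
  ultimately show ?thesis unfolding eq by linarith
qed

lemma arith2:
  fixes k :: real assumes "0 \<le> k"
  shows "(k+1)/(k+2)\<^sup>2 \<le> 1/(k+2)"
proof -
  have a: "k+2 > 0" using assms by simp
  have "(k+1)/(k+2)\<^sup>2 = ((k+1)/(k+2)) * (1/(k+2))" by (simp add: power2_eq_square)
  also have "\<dots> \<le> 1 * (1/(k+2))" by (rule mult_right_mono) (use a in simp_all)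
  finally show ?thesis by simp
qed



lemma fw_bound:
  fixes f :: "'a::euclidean_space \<Rightarrow> real" and g :: "'a \<Rightarrow> 'a"
  assumes Xc: "compact X" and Xv: "convex X"
  and der: "\<forall>x. (f has_derivative (\<lambda>h. g x \<bullet> h)) (at x)"
  and sm: "\<forall>x y. 0 \<le> f y - f x - g x \<bullet> (y - x) \<and> f y - f x - g x \<bullet> (y - x) \<le> l / 2 * (norm (y - x))\<^sup>2"
  and l: "0 \<le> l" and eta: "0 \<le> \<eta>" and B: "\<forall>a\<in>X. \<forall>b\<in>X. (norm (a - b))\<^sup>2 \<le> B"
  and e: "0 < e" and tr: "cg_trace f g X xc w \<eta> ls z s"
  shows "\<exists>t \<le> 2 * (nat \<lceil>4 * ((l + \<eta>) * B) / e\<rceil> + 1). cg_gap g xc w \<eta> (z t) (s t) \<le> e"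
proof -
  define \<phi> where "\<phi> = (\<lambda>u. w \<bullet> u + f u + \<eta> / 2 * (norm (u - xc))\<^sup>2)"
  define G where "G = cg_grad g xc w \<eta>"
  define C where "C = (l + \<eta>) * B"
  define gap where "gap = (\<lambda>t. cg_gap g xc w \<eta> (z t) (s t))"
  have z0: "z 0 \<in> X" and lo: "\<And>t. lin_oracle X (G (z t)) (s t)"
    and stp: "\<And>t. if ls then
              (\<exists>\<gamma>\<in>{0..1}. (\<forall>\<gamma>'\<in>{0..1}.
                   \<phi> ((1 - \<gamma>) *\<^sub>R z t + \<gamma> *\<^sub>R s t) \<le> \<phi> ((1 - \<gamma>') *\<^sub>R z t + \<gamma>' *\<^sub>R s t)) \<and>
                 z (Suc t) = (1 - \<gamma>) *\<^sub>R z t + \<gamma> *\<^sub>R s t)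
           else z (Suc t) = (1 - 2 / (real t + 2)) *\<^sub>R z t + (2 / (real t + 2)) *\<^sub>R s t"
    using tr unfolding cg_trace_def Let_def \<phi>_def G_def by auto
  have sX: "s t \<in> X" for t using lo[of t] unfolding lin_oracle_def by simp
  have smin: "G (z t) \<bullet> s t \<le> G (z t) \<bullet> v" if "v \<in> X" for t v
    using lo[of t] that unfolding lin_oracle_def by simp
  have zX: "z t \<in> X" for t
  proof (induction t)
    case 0 show ?case by (rule z0)
  next
    case (Suc t)
    show ?case
    proof (cases ls)
      case True
      then obtain \<gamma> where "\<gamma> \<in> {0..1}" "z (Suc t) = (1 - \<gamma>) *\<^sub>R z t + \<gamma> *\<^sub>R s t"
        using stp[of t] by auto
      then show ?thesis using convexD[OF Xv Suc sX[of t], of "1 - \<gamma>" \<gamma>] by simp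
    next
      case False
      then have "z (Suc t) = (1 - 2 / (real t + 2)) *\<^sub>R z t + (2 / (real t + 2)) *\<^sub>R s t"
        using stp[of t] by simp
      then show ?thesis using convexD[OF Xv Suc sX[of t], of "1 - 2 / (real t + 2)" "2 / (real t + 2)"]
        by simp
    qed
  qed
  have B0: "0 \<le> B" using B z0 by force
  have C0: "0 \<le> C" unfolding C_def using B0 l eta by simp
  have Gexp: "G a \<bullet> v = g a \<bullet> v + w \<bullet> v + \<eta> * ((a - xc) \<bullet> v)" for a v
    unfolding G_def cg_grad_def by (simp add: inner_add_left)
  have nsq: "(norm (b - xc))\<^sup>2 = (norm (a - xc))\<^sup>2 + 2 * ((a - xc) \<bullet> (b - a)) + (norm (b - a))\<^sup>2" for a b
  proof -
    have "b - xc = (a - xc) + (b - a)" by simp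
    then have "(norm (b - xc))\<^sup>2 = (norm ((a - xc) + (b - a)))\<^sup>2" by metis
    also have "\<dots> = (norm (a - xc))\<^sup>2 + 2 * ((a - xc) \<bullet> (b - a)) + (norm (b - a))\<^sup>2"
      by (simp only: power2_norm_eq_inner inner_add_left inner_add_right inner_commute[of "b - a" "a - xc"])
    finally show ?thesis .
  qed
  have phidiff: "\<phi> b - \<phi> a - G a \<bullet> (b - a) = (f b - f a - g a \<bullet> (b - a)) + \<eta> / 2 * (norm (b - a))\<^sup>2" for a b
  proof -
    have e1: "w \<bullet> b - w \<bullet> a = w \<bullet> (b - a)" by (simp add: inner_diff_right)
    have e2: "\<eta> / 2 * (norm (b - xc))\<^sup>2 = \<eta> / 2 * (norm (a - xc))\<^sup>2 + \<eta> * ((a - xc) \<bullet> (b - a)) + \<eta> / 2 * (norm (b - a))\<^sup>2"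
      unfolding nsq[of b a] by (simp add: algebra_simps)
    show ?thesis unfolding \<phi>_def Gexp using e1 e2 by linarith
  qed
  have upper: "\<phi> b \<le> \<phi> a + G a \<bullet> (b - a) + (l + \<eta>) / 2 * (norm (b - a))\<^sup>2" for a b
    using phidiff[of b a] sm by (smt (verit, best) distrib_right divide_inverse)
  have lower: "\<phi> a + G a \<bullet> (b - a) \<le> \<phi> b" for a b
    using phidiff[of b a] sm eta by (smt (verit) zero_le_divide_iff zero_le_power2 mult_nonneg_nonneg)
  have gap_eq: "gap t = G (z t) \<bullet> (z t - s t)" for t
    unfolding gap_def G_def cg_gap_def by simp
  have gap_nn: "0 \<le> gap t" for t
    using smin[OF zX, of t t] unfolding gap_eq by (simp add: inner_diff_right)
  have desc: "\<phi> ((1 - \<gamma>) *\<^sub>R z t + \<gamma> *\<^sub>R s t) \<le> \<phi> (z t) - \<gamma> * gap t + \<gamma>\<^sup>2 * C / 2"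
    if g0: "0 \<le> \<gamma>" for t \<gamma>
  proof -
    have d: "(1 - \<gamma>) *\<^sub>R z t + \<gamma> *\<^sub>R s t - z t = \<gamma> *\<^sub>R (s t - z t)"
      by (simp add: algebra_simps)
    have i1: "G (z t) \<bullet> ((1 - \<gamma>) *\<^sub>R z t + \<gamma> *\<^sub>R s t - z t) = - \<gamma> * gap t"
      unfolding d gap_eq by (simp add: inner_diff_right algebra_simps)
    have "(norm ((1 - \<gamma>) *\<^sub>R z t + \<gamma> *\<^sub>R s t - z t))\<^sup>2 = \<gamma>\<^sup>2 * (norm (s t - z t))\<^sup>2"
      unfolding d by (simp add: power_mult_distrib)
    also have "\<dots> \<le> \<gamma>\<^sup>2 * B" using B sX zX by (simp add: mult_left_mono)
    finally have n1: "(norm ((1 - \<gamma>) *\<^sub>R z t + \<gamma> *\<^sub>R s t - z t))\<^sup>2 \<le> \<gamma>\<^sup>2 * B" .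
    have "(l + \<eta>) / 2 * (norm ((1 - \<gamma>) *\<^sub>R z t + \<gamma> *\<^sub>R s t - z t))\<^sup>2 \<le> (l + \<eta>) / 2 * (\<gamma>\<^sup>2 * B)"
      by (rule mult_left_mono[OF n1]) (use l eta in simp)
    moreover have "(l + \<eta>) / 2 * (\<gamma>\<^sup>2 * B) = \<gamma>\<^sup>2 * C / 2" unfolding C_def by (simp add: algebra_simps)
    moreover have "\<phi> ((1 - \<gamma>) *\<^sub>R z t + \<gamma> *\<^sub>R s t) \<le> \<phi> (z t) + G (z t) \<bullet> ((1 - \<gamma>) *\<^sub>R z t + \<gamma> *\<^sub>R s t - z t)
        + (l + \<eta>) / 2 * (norm ((1 - \<gamma>) *\<^sub>R z t + \<gamma> *\<^sub>R s t - z t))\<^sup>2"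
      by (rule upper)
    ultimately show ?thesis using i1 by linarith
  qed
  have step2: "\<phi> (z (Suc t)) \<le> \<phi> (z t) - (2 / (real t + 2)) * gap t + (2 / (real t + 2))\<^sup>2 * C / 2" for t
  proof (cases ls)
    case True
    then obtain \<gamma> where "\<forall>\<gamma>'\<in>{0..1}.
                   \<phi> ((1 - \<gamma>) *\<^sub>R z t + \<gamma> *\<^sub>R s t) \<le> \<phi> ((1 - \<gamma>') *\<^sub>R z t + \<gamma>' *\<^sub>R s t)"
       "z (Suc t) = (1 - \<gamma>) *\<^sub>R z t + \<gamma> *\<^sub>R s t"
      using stp[of t] by auto
    then have "\<phi> (z (Suc t)) \<le> \<phi> ((1 - 2 / (real t + 2)) *\<^sub>R z t + (2 / (real t + 2)) *\<^sub>R s t)"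
      by simp
    also have "\<dots> \<le> \<phi> (z t) - (2 / (real t + 2)) * gap t + (2 / (real t + 2))\<^sup>2 * C / 2"
      by (rule desc) simp
    finally show ?thesis .
  next
    case False
    then have "z (Suc t) = (1 - 2 / (real t + 2)) *\<^sub>R z t + (2 / (real t + 2)) *\<^sub>R s t"
      using stp[of t] by simp
    then show ?thesis using desc[of "2 / (real t + 2)" t] by simp
  qed
  have contf: "continuous_on X f"
    using der by (meson continuous_at_imp_continuous_on has_derivative_continuous)
  have "continuous_on X \<phi>" unfolding \<phi>_def
    by (intro continuous_intros contf)
  then obtain u where uX: "u \<in> X" and umin: "\<And>v. v \<in> X \<Longrightarrow> \<phi> u \<le> \<phi> v"
    using continuous_attains_inf[OF Xc _] z0 by blast
  define h where "h = (\<lambda>t. \<phi> (z t) - \<phi> u)"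
  have h_nn: "0 \<le> h t" for t unfolding h_def using umin[OF zX] by simp
  have h_gap: "h t \<le> gap t" for t
    using lower[of "z t" u] smin[OF uX, of t] unfolding h_def gap_eq by (simp add: inner_diff_right)
  have rec: "h (Suc t) \<le> (1 - 2 / (real t + 2)) * h t + (2 / (real t + 2))\<^sup>2 * C / 2" for t
  proof -
    have "(2 / (real t + 2)) * h t \<le> (2 / (real t + 2)) * gap t"
      by (rule mult_left_mono[OF h_gap]) simp
    then show ?thesis using step2[of t] unfolding h_def by (simp add: algebra_simps)
  qed
  have claim: "h (Suc t) \<le> 2 * C / (real t + 3)" for t
  proof (induction t)
    case 0
    show ?case using rec[of 0] C0 by simp
  next
    case (Suc t)
    have g: "1 - 2 / (real (Suc t) + 2) \<ge> 0" by simp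
    have eq3: "real (Suc t) + 2 = real t + 3" by simp
    have "h (Suc (Suc t)) \<le> (1 - 2 / (real (Suc t) + 2)) * h (Suc t) + (2 / (real (Suc t) + 2))\<^sup>2 * C / 2"
      by (rule rec)
    also have "\<dots> \<le> (1 - 2 / (real (Suc t) + 2)) * (2 * C / (real t + 3)) + (2 / (real (Suc t) + 2))\<^sup>2 * C / 2"
      using mult_left_mono[OF Suc g] by simp
    also have "\<dots> = (1 - 2 / (real t + 3)) * (2 * C / (real t + 3)) + (2 / (real t + 3))\<^sup>2 * C / 2"
      by (simp only: eq3)
    also have "\<dots> \<le> 2 * C / (real t + 4)" by (rule arith1) (use C0 in simp_all)
    finally show ?case by (simp add: add.commute)
  qed
  define K where "K = nat \<lceil>4 * C / e\<rceil> + 1"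
  have K1: "1 \<le> K" unfolding K_def by simp
  have Kbig: "4 * C < e * (real K + 2)"
  proof -
    have "4 * C / e \<le> real (nat \<lceil>4 * C / e\<rceil>)" by linarith
    then have "4 * C / e < real K + 2" unfolding K_def by simp
    then show ?thesis using e by (simp add: field_simps)
  qed
  show ?thesis
  proof (rule ccontr)
    assume "\<not> ?thesis"
    then have big: "e < gap t" if "t \<le> 2 * K" for t using that unfolding gap_def C_def K_def by force
    have hK: "h K \<le> 2 * C / (real K + 2)"
    proof -
      obtain k0 where k0: "K = Suc k0" using K1 by (cases K) auto
      show ?thesis using claim[of k0] unfolding k0 by (simp add: add.commute)
    qed
    have iter: "h (K + j) \<le> h K - real j * e / (real K + 1) + real j * (2 * C / (real K + 2)\<^sup>2)"
      if "j \<le> K + 1" for j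
      using that
    proof (induction j)
      case 0 then show ?case by simp
    next
      case (Suc j)
      define \<gamma> where "\<gamma> = 2 / (real (K + j) + 2)"
      have tle: "K + j \<le> 2 * K" using Suc.prems by simp
      have gpos: "0 < \<gamma>" unfolding \<gamma>_def by simp
      have gl: "1 / (real K + 1) \<le> \<gamma>"
      proof -
        have "real (K + j) + 2 \<le> 2 * (real K + 1)" using tle by simp
        then show ?thesis unfolding \<gamma>_def by (simp add: field_simps)
      qed
      have gu: "\<gamma> \<le> 2 / (real K + 2)" unfolding \<gamma>_def by (simp add: frac_le)
      have "e / (real K + 1) \<le> \<gamma> * e" using mult_right_mono[OF gl, of e] e by simp
      also have "\<dots> \<le> \<gamma> * gap (K + j)" using big[OF tle] gpos by simp
      finally have A: "e / (real K + 1) \<le> \<gamma> * gap (K + j)" .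
      have "\<gamma>\<^sup>2 \<le> (2 / (real K + 2))\<^sup>2" by (rule power_mono[OF gu]) (use gpos in simp)
      then have "\<gamma>\<^sup>2 * C \<le> (2 / (real K + 2))\<^sup>2 * C" using C0 by (rule mult_right_mono)
      then have Bq: "\<gamma>\<^sup>2 * C / 2 \<le> 2 * C / (real K + 2)\<^sup>2"
        by (simp add: power_divide)
      have "h (K + Suc j) \<le> h (K + j) - \<gamma> * gap (K + j) + \<gamma>\<^sup>2 * C / 2"
        using step2[of "K + j"] unfolding h_def \<gamma>_def by simp
      moreover have "real (Suc j) * e / (real K + 1) = real j * e / (real K + 1) + e / (real K + 1)"
        by (simp add: algebra_simps add_divide_distrib)
      moreover have "real (Suc j) * (2 * C / (real K + 2)\<^sup>2) = real j * (2 * C / (real K + 2)\<^sup>2) + 2 * C / (real K + 2)\<^sup>2"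
        by (simp add: algebra_simps add_divide_distrib)
      moreover have "h (K + j) \<le> h K - real j * e / (real K + 1) + real j * (2 * C / (real K + 2)\<^sup>2)"
        using Suc.IH Suc.prems by simp
      ultimately show ?case using A Bq by (simp only: add_Suc_right)
    qed
    have "h (K + (K + 1)) \<le> h K - real (K + 1) * e / (real K + 1) + real (K + 1) * (2 * C / (real K + 2)\<^sup>2)"
      by (rule iter) simp
    also have "real (K + 1) * e / (real K + 1) = e" proof - have "real K + 1 > 0" by simp then show ?thesis by (simp add: field_simps) qed
    also have "real (K + 1) * (2 * C / (real K + 2)\<^sup>2) = 2 * C * ((real K + 1) / (real K + 2)\<^sup>2)"
      by simp
    also have "\<dots> \<le> 2 * C * (1 / (real K + 2))"
      by (rule mult_left_mono[OF arith2]) (use C0 in simp_all)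
    finally have "h (K + (K + 1)) \<le> h K - e + 2 * C / (real K + 2)" by simp
    then have "h (K + (K + 1)) \<le> 4 * C / (real K + 2) - e" using hK by simp
    moreover have "4 * C / (real K + 2) < e" using Kbig by (simp add: field_simps)
    ultimately show False using h_nn[of "K + (K + 1)"] by simp
  qed
qed



lemma telesc:
  fixes P \<Phi> :: "nat \<Rightarrow> real"
  assumes "\<forall>k\<in>{1..N}. P k \<le> c + \<Phi> (k - 1) - \<Phi> k"
  shows "(\<Sum>k=1..N. P k) \<le> real N * c + \<Phi> 0 - \<Phi> N"
  using assms
proof (induction N)
  case 0 then show ?case by simp
next
  case (Suc N)
  have "(\<Sum>k=1..Suc N. P k) = (\<Sum>k=1..N. P k) + P (Suc N)" by simp
  also have "\<dots> \<le> (real N * c + \<Phi> 0 - \<Phi> N) + (c + \<Phi> N - \<Phi> (Suc N))"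
  proof (rule add_mono)
    show "(\<Sum>k=1..N. P k) \<le> real N * c + \<Phi> 0 - \<Phi> N" using Suc.IH Suc.prems by auto
    have "Suc N \<in> {1..Suc N}" by simp
    then show "P (Suc N) \<le> c + \<Phi> N - \<Phi> (Suc N)" using Suc.prems by fastforce
  qed
  finally show ?case by (simp add: algebra_simps)
qed

lemma three_point:
  fixes p q r :: "'a::real_inner"
  shows "2 * ((p - q) \<bullet> (p - r)) = (p - r) \<bullet> (p - r) - (q - r) \<bullet> (q - r) + (p - q) \<bullet> (p - q)"
  by (simp add: inner_diff_left inner_diff_right inner_commute algebra_simps)

lemma two_point:
  fixes p q :: "'a::real_inner"
  shows "2 * (p \<bullet> (p - q)) = p \<bullet> p - q \<bullet> q + (p - q) \<bullet> (p - q)"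
  by (simp add: inner_diff_left inner_diff_right inner_commute algebra_simps)

lemma ip_add_right: "ip m u (\<lambda>i. v i + w i) = ip m u v + ip m u w"
  by (simp add: ip_sym[of m u] ip_add_left)

lemma ip_diff_right: "ip m u (\<lambda>i. v i - w i) = ip m u v - ip m u w"
  by (simp add: ip_sym[of m u] ip_diff_left)

lemma ip_neg_neg: "ip m (\<lambda>i. - v i) (\<lambda>i. - v i) = ip m v v"
  unfolding ip_def by simp

lemma ip_zero_right: "ip m u (\<lambda>i. 0) = 0"
  unfolding ip_def by simp



lemma pd_sum:
  fixes x y :: "nat \<Rightarrow> nat \<Rightarrow> 'a::euclidean_space" and xs :: "nat \<Rightarrow> 'a"
    and f :: "nat \<Rightarrow> 'a \<Rightarrow> real" and gf :: "nat \<Rightarrow> 'a \<Rightarrow> 'a"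
  assumes sym: "\<forall>i j. E i j \<longleftrightarrow> E j i"
  and Lpos: "lap_norm m E > 0"
  and cvx: "\<forall>i\<in>{1..m}. \<forall>a b. f i a + gf i a \<bullet> (b - a) \<le> f i b"
  and xsA: "\<forall>i\<in>{1..m}. lap_apply m E xs i = 0"
  and dual: "\<forall>k\<in>{1..N}. \<forall>i\<in>{1..m}. y k i = y (k - 1) i + (1 / lap_norm m E) *\<^sub>R lap_apply m E (dcgs_xt 1 x k) i"
  and gapc: "\<forall>k\<in>{1..N}. \<forall>i\<in>{1..m}. cg_grad (gf i) (x (k - 1) i) (lap_apply m E (y k) i) (2 * lap_norm m E) (x k i) \<bullet> (x k i - xs i) \<le> e"
  shows "(\<Sum>k=1..N. (Ftot m f (x k) - Ftot m f xs)) \<le> real N * (real m * e)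
           + lap_norm m E * ip m (\<lambda>i. x 0 i - xs i) (\<lambda>i. x 0 i - xs i) + lap_norm m E / 2 * ip m (y 0) (y 0)"
proof -
  define L where "L = lap_norm m E"
  have L: "L > 0" using Lpos unfolding L_def .
  define A where "A = (lap_apply m E :: (nat \<Rightarrow> 'a) \<Rightarrow> nat \<Rightarrow> 'a)"
  define dd where "dd = (\<lambda>k i. x k i - x (k - 1) i)"
  define a where "a = (\<lambda>k. ip m (\<lambda>i. x k i - xs i) (\<lambda>i. x k i - xs i))"
  define b where "b = (\<lambda>k. ip m (y k) (y k))"
  define Q where "Q = (\<lambda>k. ip m (y k) (A (dd k)))"
  define \<Phi> where "\<Phi> = (\<lambda>k. L * a k + L / 2 * b k + Q k + L / 2 * ip m (dd k) (dd k))"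
  define P where "P = (\<lambda>k. Ftot m f (x k) - Ftot m f xs)"
  have symA: "ip m (A u) v = ip m u (A v)" for u v unfolding A_def by (rule lap_sym[OF sym])
  have bil: "ip m (A u) v \<le> L / 2 * (ip m u u + ip m v v)" for u v
    unfolding A_def L_def by (rule lap_bilin_bound[OF Lpos])
  have step: "P k \<le> real m * e + \<Phi> (k - 1) - \<Phi> k" if k: "k \<in> {1..N}" for k
  proof -
    define \<Delta> where "\<Delta> = (\<lambda>i. y k i - y (k - 1) i)"
    define xt where "xt = dcgs_xt 1 x k"
    define T1 where "T1 = ip m (A (y k)) (\<lambda>i. x k i - xs i)"
    define T2 where "T2 = ip m (dd k) (\<lambda>i. x k i - xs i)"
    have s1: "P k \<le> (\<Sum>i=1..m. gf i (x k i) \<bullet> (x k i - xs i))"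
    proof -
      have "P k = (\<Sum>i=1..m. f i (x k i) - f i (xs i))"
        unfolding P_def Ftot_def by (simp add: sum_subtractf)
      also have "\<dots> \<le> (\<Sum>i=1..m. gf i (x k i) \<bullet> (x k i - xs i))"
      proof (rule sum_mono)
        fix i assume i: "i \<in> {1..m}"
        have "f i (x k i) + gf i (x k i) \<bullet> (xs i - x k i) \<le> f i (xs i)" using cvx i by blast
        then show "f i (x k i) - f i (xs i) \<le> gf i (x k i) \<bullet> (x k i - xs i)"
          by (simp add: inner_diff_right)
      qed
      finally show ?thesis .
    qed
    have s2: "(\<Sum>i=1..m. gf i (x k i) \<bullet> (x k i - xs i)) \<le> real m * e - T1 - 2 * L * T2"
    proof -
      have "(\<Sum>i=1..m. gf i (x k i) \<bullet> (x k i - xs i))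
          \<le> (\<Sum>i=1..m. e - A (y k) i \<bullet> (x k i - xs i) - 2 * L * (dd k i \<bullet> (x k i - xs i)))"
      proof (rule sum_mono)
        fix i assume i: "i \<in> {1..m}"
        have "cg_grad (gf i) (x (k - 1) i) (lap_apply m E (y k) i) (2 * L) (x k i) \<bullet> (x k i - xs i) \<le> e"
          using gapc k i unfolding L_def by blast
        then show "gf i (x k i) \<bullet> (x k i - xs i) \<le> e - A (y k) i \<bullet> (x k i - xs i) - 2 * L * (dd k i \<bullet> (x k i - xs i))"
          unfolding cg_grad_def A_def dd_def by (simp add: inner_add_left)
      qed
      also have "\<dots> = real m * e - T1 - 2 * L * T2"
        unfolding T1_def T2_def ip_def by (simp add: sum_subtractf sum_distrib_left)
      finally show ?thesis .
    qed
    have s3: "2 * T2 = a k - a (k - 1) + ip m (dd k) (dd k)"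
    proof -
      have "2 * T2 = (\<Sum>i=1..m. 2 * ((x k i - x (k - 1) i) \<bullet> (x k i - xs i)))"
        unfolding T2_def ip_def dd_def by (simp add: sum_distrib_left)
      also have "\<dots> = (\<Sum>i=1..m. (x k i - xs i) \<bullet> (x k i - xs i) - (x (k - 1) i - xs i) \<bullet> (x (k - 1) i - xs i)
                     + (x k i - x (k - 1) i) \<bullet> (x k i - x (k - 1) i))"
        by (simp only: three_point)
      also have "\<dots> = a k - a (k - 1) + ip m (dd k) (dd k)"
        unfolding a_def ip_def dd_def by (simp add: sum_subtractf sum.distrib)
      finally show ?thesis .
    qed
    have s4: "T1 = ip m (y k) (A (x k))"
    proof -
      have "T1 = ip m (y k) (A (\<lambda>i. x k i - xs i))" unfolding T1_def by (rule symA)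
      also have "\<dots> = ip m (y k) (A (x k))"
        by (rule ip_cong) (auto simp: A_def lap_diff xsA)
      finally show ?thesis .
    qed
    have xk: "x k = (\<lambda>i. (xt i + dd k i) - dd (k - 1) i)"
    proof
      fix i
      have "k - 1 - 1 = k - 2" by simp
      then show "x k i = (xt i + dd k i) - dd (k - 1) i"
        unfolding xt_def dcgs_xt_def dd_def by (simp add: algebra_simps)
    qed
    have s5: "ip m (y k) (A (x k)) = ip m (y k) (A xt) + Q k - ip m (y k) (A (dd (k - 1)))"
    proof -
      have "A (x k) = (\<lambda>i. (A xt i + A (dd k) i) - A (dd (k - 1)) i)"
        by (subst xk, rule ext) (simp add: A_def lap_apply_def scaleR_add_right scaleR_diff_right sum.distrib sum_subtractf)
      then show ?thesis unfolding Q_def by (simp add: ip_add_right ip_diff_right)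
    qed
    have s6: "ip m (y k) (A xt) = L * ip m (y k) \<Delta>"
    proof -
      have "ip m (y k) (A xt) = ip m (y k) (\<lambda>i. L *\<^sub>R \<Delta> i)"
      proof (rule ip_cong)
        fix i assume i: "i \<in> {1..m}"
        have "y k i = y (k - 1) i + (1 / L) *\<^sub>R A xt i"
          using dual k i unfolding L_def A_def xt_def by blast
        then have "\<Delta> i = (1 / L) *\<^sub>R A xt i" unfolding \<Delta>_def by simp
        then show "A xt i = L *\<^sub>R \<Delta> i" using L by simp
      qed simp
      also have "\<dots> = L * ip m (y k) \<Delta>" by (simp add: ip_sym[of m "y k"] ip_scale_left)
      finally show ?thesis .
    qed
    have s7: "2 * ip m (y k) \<Delta> = b k - b (k - 1) + ip m \<Delta> \<Delta>"
    proof -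
      have "2 * ip m (y k) \<Delta> = (\<Sum>i=1..m. 2 * (y k i \<bullet> (y k i - y (k - 1) i)))"
        unfolding ip_def \<Delta>_def by (simp add: sum_distrib_left)
      also have "\<dots> = (\<Sum>i=1..m. y k i \<bullet> y k i - y (k - 1) i \<bullet> y (k - 1) i + (y k i - y (k - 1) i) \<bullet> (y k i - y (k - 1) i))"
        by (simp only: two_point)
      also have "\<dots> = b k - b (k - 1) + ip m \<Delta> \<Delta>"
        unfolding b_def ip_def \<Delta>_def by (simp add: sum_subtractf sum.distrib)
      finally show ?thesis .
    qed
    have s8: "ip m (y k) (A (dd (k - 1))) = Q (k - 1) + ip m \<Delta> (A (dd (k - 1)))"
    proof -
      have "y k = (\<lambda>i. y (k - 1) i + \<Delta> i)" unfolding \<Delta>_def by simp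
      then have "ip m (y k) (A (dd (k - 1))) = ip m (\<lambda>i. y (k - 1) i + \<Delta> i) (A (dd (k - 1)))" by simp
      then show ?thesis unfolding Q_def by (simp add: ip_add_left)
    qed
    have s9: "ip m \<Delta> (A (dd (k - 1))) \<le> L / 2 * ip m \<Delta> \<Delta> + L / 2 * ip m (dd (k - 1)) (dd (k - 1))"
      using bil[of \<Delta> "dd (k - 1)"] symA[of \<Delta> "dd (k - 1)"] by (simp add: algebra_simps)
    have e7: "L * ip m (y k) \<Delta> = L / 2 * b k - L / 2 * b (k - 1) + L / 2 * ip m \<Delta> \<Delta>"
    proof -
      have "L * ip m (y k) \<Delta> = L / 2 * (2 * ip m (y k) \<Delta>)" by simp
      also have "\<dots> = L / 2 * (b k - b (k - 1) + ip m \<Delta> \<Delta>)" unfolding s7 ..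
      finally show ?thesis by (simp add: algebra_simps)
    qed
    have e3: "2 * L * T2 = L * a k - L * a (k - 1) + L * ip m (dd k) (dd k)"
    proof -
      have "2 * L * T2 = L * (2 * T2)" by simp
      also have "\<dots> = L * (a k - a (k - 1) + ip m (dd k) (dd k))" unfolding s3 ..
      finally show ?thesis by (simp add: algebra_simps)
    qed
    have dpos: "0 \<le> L / 2 * ip m (dd k) (dd k)" using L ip_nonneg[of m "dd k"] by simp
    have "P k \<le> real m * e - T1 - 2 * L * T2" using s1 s2 by linarith
    then show ?thesis unfolding \<Phi>_def using s4 s5 s6 s8 s9 e7 e3 dpos by linarith
  qed
  have tel: "(\<Sum>k=1..N. P k) \<le> real N * (real m * e) + \<Phi> 0 - \<Phi> N"
    by (rule telesc) (use step in blast)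
  have dd0: "dd 0 = (\<lambda>i. 0)" unfolding dd_def by simp
  have Phi0: "\<Phi> 0 = L * a 0 + L / 2 * b 0"
    unfolding \<Phi>_def Q_def dd0 A_def by (simp add: lap_zero ip_zero_right ip_def)
  have PhiN: "0 \<le> \<Phi> N"
  proof -
    have "- Q N = ip m (A (y N)) (\<lambda>i. - dd N i)"
      unfolding Q_def by (simp add: symA ip_neg_right)
    also have "\<dots> \<le> L / 2 * (b N + ip m (dd N) (dd N))"
      using bil[of "y N" "\<lambda>i. - dd N i"] unfolding b_def by (simp add: ip_neg_neg)
    finally have "- Q N \<le> L / 2 * b N + L / 2 * ip m (dd N) (dd N)" by (simp add: algebra_simps)
    moreover have "0 \<le> L * a N" using L ip_nonneg[of m "\<lambda>i. x N i - xs i"] unfolding a_def by simp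
    ultimately show ?thesis unfolding \<Phi>_def by linarith
  qed
  show ?thesis using tel Phi0 PhiN unfolding P_def a_def b_def L_def by linarith
qed



lemma jensen_F:
  fixes x :: "nat \<Rightarrow> nat \<Rightarrow> 'a::euclidean_space"
  assumes N: "N \<ge> 1" and cvx: "\<forall>i\<in>{1..m}. \<forall>a b. f i a + gf i a \<bullet> (b - a) \<le> f i b"
  shows "Ftot m f (dcgs_output N (\<lambda>k. 1) x) \<le> (1 / real N) * (\<Sum>k=1..N. Ftot m f (x k))"
proof -
  have Npos: "real N > 0" using N by simp
  have one: "f i (dcgs_output N (\<lambda>k. 1) x i) \<le> (1 / real N) * (\<Sum>k=1..N. f i (x k i))"
    if i: "i \<in> {1..m}" for i
  proof -
    define xb where "xb = dcgs_output N (\<lambda>k. 1) x i"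
    have xb: "xb = (1 / real N) *\<^sub>R (\<Sum>k=1..N. x k i)" unfolding xb_def dcgs_output_def by simp
    have sx: "(\<Sum>k=1..N. x k i) = real N *\<^sub>R xb" unfolding xb using Npos by simp
    have "(\<Sum>k=1..N. f i xb + gf i xb \<bullet> (x k i - xb)) \<le> (\<Sum>k=1..N. f i (x k i))"
      by (rule sum_mono) (use cvx i in blast)
    moreover have "(\<Sum>k=1..N. f i xb + gf i xb \<bullet> (x k i - xb)) = real N * f i xb"
    proof -
      have "(\<Sum>k=1..N. gf i xb \<bullet> (x k i - xb)) = gf i xb \<bullet> ((\<Sum>k=1..N. x k i) - real N *\<^sub>R xb)"
        by (simp add: inner_sum_right[symmetric] sum_subtractf inner_diff_right)
      also have "\<dots> = 0" unfolding sx by simp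
      finally show ?thesis by (simp add: sum.distrib)
    qed
    ultimately have "real N * f i xb \<le> (\<Sum>k=1..N. f i (x k i))" by simp
    then show ?thesis unfolding xb_def[symmetric] using Npos by (simp add: field_simps)
  qed
  have "Ftot m f (dcgs_output N (\<lambda>k. 1) x) \<le> (\<Sum>i=1..m. (1 / real N) * (\<Sum>k=1..N. f i (x k i)))"
    unfolding Ftot_def by (rule sum_mono) (rule one)
  also have "\<dots> = (1 / real N) * (\<Sum>k=1..N. Ftot m f (x k))"
    unfolding Ftot_def by (simp add: sum_divide_distrib[symmetric]) (rule disjI2, rule sum.swap)
  finally show ?thesis .
qed



lemma lo_arith:
  fixes Ln D \<epsilon> l B m N :: real
  assumes Ln: "Ln > 0" and D: "D > 0" and ep: "\<epsilon> > 0" and l: "l \<ge> 0" and B: "B \<ge> 0"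
    and m: "m \<ge> 1" and N: "N > 0" and NL: "N \<le> 4 * Ln * D / \<epsilon>" and eL: "\<epsilon> \<le> Ln"
  shows "N * (8 * ((l + 2 * Ln) * B) / (Ln * D / (m * N)) + 5) \<le> (256 * B + 20) * m * Ln * (l + Ln) * D / \<epsilon>\<^sup>2"
proof -
  have eq: "N * (8 * ((l + 2 * Ln) * B) / (Ln * D / (m * N)) + 5) = (8 * (l + 2 * Ln) * B * m / (Ln * D)) * N\<^sup>2 + 5 * N"
    using Ln D N m by (simp add: field_simps power2_eq_square)
  have N2: "N\<^sup>2 \<le> (4 * Ln * D / \<epsilon>)\<^sup>2" by (rule power_mono[OF NL]) (use N in simp)
  have c0: "0 \<le> 8 * (l + 2 * Ln) * B * m / (Ln * D)" using Ln D l B m by simp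
  have "(8 * (l + 2 * Ln) * B * m / (Ln * D)) * N\<^sup>2 \<le> (8 * (l + 2 * Ln) * B * m / (Ln * D)) * (4 * Ln * D / \<epsilon>)\<^sup>2"
    by (rule mult_left_mono[OF N2 c0])
  also have "\<dots> = 128 * (l + 2 * Ln) * B * m * Ln * D / \<epsilon>\<^sup>2"
    using Ln D ep by (simp add: field_simps power2_eq_square)
  also have "\<dots> \<le> 256 * B * m * Ln * (l + Ln) * D / \<epsilon>\<^sup>2"
  proof (rule divide_right_mono)
    have "(l + 2 * Ln) \<le> 2 * (l + Ln)" using l by simp
    then have "(l + 2 * Ln) * (B * m * Ln * D) \<le> 2 * (l + Ln) * (B * m * Ln * D)"
      by (rule mult_right_mono) (use B m Ln D in simp)
    then show "128 * (l + 2 * Ln) * B * m * Ln * D \<le> 256 * B * m * Ln * (l + Ln) * D"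
      by (simp add: algebra_simps)
  qed simp
  finally have t1: "(8 * (l + 2 * Ln) * B * m / (Ln * D)) * N\<^sup>2 \<le> 256 * B * m * Ln * (l + Ln) * D / \<epsilon>\<^sup>2" .
  have "5 * N \<le> 5 * (4 * Ln * D / \<epsilon>)" using NL by simp
  also have "\<dots> = 20 * Ln * D * \<epsilon> / \<epsilon>\<^sup>2" using ep by (simp add: field_simps power2_eq_square)
  also have "\<dots> \<le> 20 * Ln * D * (m * (l + Ln)) / \<epsilon>\<^sup>2"
  proof (rule divide_right_mono)
    have "\<epsilon> \<le> m * (l + Ln)"
    proof -
      have "\<epsilon> \<le> 1 * (l + Ln)" using eL l by simp
      also have "\<dots> \<le> m * (l + Ln)" by (rule mult_right_mono) (use m l Ln in simp_all)
      finally show ?thesis .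
    qed
    then show "20 * Ln * D * \<epsilon> \<le> 20 * Ln * D * (m * (l + Ln))"
      by (rule mult_left_mono) (use Ln D in simp)
  qed simp
  finally have t2: "5 * N \<le> 20 * Ln * D * (m * (l + Ln)) / \<epsilon>\<^sup>2" .
  have "(256 * B + 20) * m * Ln * (l + Ln) * D / \<epsilon>\<^sup>2 = 256 * B * m * Ln * (l + Ln) * D / \<epsilon>\<^sup>2 + 20 * Ln * D * (m * (l + Ln)) / \<epsilon>\<^sup>2"
    by (simp add: algebra_simps add_divide_distrib)
  then show ?thesis unfolding eq using t1 t2 by linarith
qed



theorem corollary1:
  fixes X :: "'a::euclidean_space set"
  assumes "compact X" and "convex X" and "X \<noteq> {}"
  shows "\<exists>C1>0. \<exists>C2>0.
    \<forall>(m::nat) (E::nat \<Rightarrow> nat \<Rightarrow> bool) (f::nat \<Rightarrow> 'a \<Rightarrow> real) (gf::nat \<Rightarrow> 'a \<Rightarrow> 'a) (l::real)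
      (x0::nat \<Rightarrow> 'a) (y0::nat \<Rightarrow> 'a) (xs::nat \<Rightarrow> 'a) (ls::bool).
      m \<ge> 2 \<and> simple_graph_on m E \<and> graph_connected m E \<and>
      (\<forall>i\<in>{1..m}. \<forall>x. (f i has_derivative (\<lambda>h. gf i x \<bullet> h)) (at x)) \<and>
      (\<forall>i\<in>{1..m}. \<forall>x y. 0 \<le> f i y - f i x - gf i x \<bullet> (y - x) \<and>
                        f i y - f i x - gf i x \<bullet> (y - x) \<le> l / 2 * (norm (y - x))\<^sup>2) \<and>
      (\<forall>i\<in>{1..m}. x0 i \<in> X) \<and>
      is_opt_sol m E f X xs \<and>
      max ((snorm m (\<lambda>i. x0 i - xs i))\<^sup>2) ((snorm m y0)\<^sup>2) > 0
      \<longrightarrow>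
      (let Ln = lap_norm m E; D = max ((snorm m (\<lambda>i. x0 i - xs i))\<^sup>2) ((snorm m y0)\<^sup>2) in
       \<exists>\<epsilon>0>0. \<forall>\<epsilon>. 0 < \<epsilon> \<and> \<epsilon> < \<epsilon>0 \<longrightarrow>
         (\<exists>N::nat. N \<ge> 1 \<and> real (2 * N) \<le> C1 * Ln * D / \<epsilon> \<and>
           (\<forall>x y Z S.
              dcgs_run m E f gf X N (\<lambda>k. 1) (\<lambda>k. Ln) (\<lambda>k. 2 * Ln)
                 (\<lambda>k i. Ln * D / (real m * real N)) ls x0 y0 x y Z S
              \<longrightarrow>
              dcgs_cg_terminates m E gf N (\<lambda>k. 2 * Ln) (\<lambda>k i. Ln * D / (real m * real N)) x y Z S \<and>
              Ftot m f (dcgs_output N (\<lambda>k. 1) x) - Ftot m f xs \<le> \<epsilon> \<and>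
              (\<forall>i\<in>{1..m}. real (dcgs_lo_calls m E (gf i) i N (\<lambda>k. 2 * Ln)
                                   (\<lambda>k i. Ln * D / (real m * real N)) x y Z S)
                 \<le> C2 * real m * Ln * (l + Ln) * D / \<epsilon>\<^sup>2))))"
proof -
  obtain r where r: "\<forall>x\<in>X. norm x \<le> r"
    using compact_imp_bounded[OF assms(1)] unfolding bounded_iff by auto
  obtain x00 where "x00 \<in> X" using assms(3) by auto
  then have r0: "0 \<le> r" using r norm_ge_zero order_trans by blast
  define B where "B = (2 * r)\<^sup>2"
  have B0: "0 \<le> B" unfolding B_def by simp
  have Bb: "\<forall>a\<in>X. \<forall>b\<in>X. (norm (a - b))\<^sup>2 \<le> B"
  proof (intro ballI)
    fix a b assume "a \<in> X" "b \<in> X"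
    then have "norm a \<le> r" "norm b \<le> r" using r by auto
    then have "norm (a - b) \<le> 2 * r" using norm_triangle_ineq4[of a b] by linarith
    then show "(norm (a - b))\<^sup>2 \<le> B" unfolding B_def by (rule power_mono) simp
  qed
  show ?thesis
    apply (rule exI[where x="8::real"])
    apply (rule conjI, simp)
    apply (rule exI[where x="256 * B + 20"])
    apply (rule conjI, use B0 in simp)
    apply (intro allI impI)
  proof -
    fix m :: nat and E :: "nat \<Rightarrow> nat \<Rightarrow> bool" and f :: "nat \<Rightarrow> 'a \<Rightarrow> real" and gf :: "nat \<Rightarrow> 'a \<Rightarrow> 'a"
      and l :: real and x0 y0 xs :: "nat \<Rightarrow> 'a" and ls :: bool
    assume H: "m \<ge> 2 \<and> simple_graph_on m E \<and> graph_connected m E \<and>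
      (\<forall>i\<in>{1..m}. \<forall>x. (f i has_derivative (\<lambda>h. gf i x \<bullet> h)) (at x)) \<and>
      (\<forall>i\<in>{1..m}. \<forall>x y. 0 \<le> f i y - f i x - gf i x \<bullet> (y - x) \<and>
                        f i y - f i x - gf i x \<bullet> (y - x) \<le> l / 2 * (norm (y - x))\<^sup>2) \<and>
      (\<forall>i\<in>{1..m}. x0 i \<in> (X::'a set)) \<and>
      is_opt_sol m E f X xs \<and>
      max ((snorm m (\<lambda>i. x0 i - xs i))\<^sup>2) ((snorm m y0)\<^sup>2) > 0"
    let ?Ln = "lap_norm m E"
    let ?D = "max ((snorm m (\<lambda>i. x0 i - xs i))\<^sup>2) ((snorm m y0)\<^sup>2)"
    have m2: "m \<ge> 2" and sg: "simple_graph_on m E" and con: "graph_connected m E"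
      and der: "\<forall>i\<in>{1..m}. \<forall>x. (f i has_derivative (\<lambda>h. gf i x \<bullet> h)) (at x)"
      and sm: "\<forall>i\<in>{1..m}. \<forall>x y. 0 \<le> f i y - f i x - gf i x \<bullet> (y - x) \<and>
                        f i y - f i x - gf i x \<bullet> (y - x) \<le> l / 2 * (norm (y - x))\<^sup>2"
      and x0X: "\<forall>i\<in>{1..m}. x0 i \<in> X" and opt: "is_opt_sol m E f X xs"
      and Dpos: "?D > 0"
      using H by auto
    have symE: "\<forall>i j. E i j \<longleftrightarrow> E j i" using sg unfolding simple_graph_on_def by blast
    have Ln1: "1 \<le> ?Ln" by (rule lap_norm_ge1[OF m2 sg con])
    have Lpos: "0 < ?Ln" using Ln1 by simp
    have l0: "0 \<le> l"
    proof -
      obtain bb :: 'a where bb: "bb \<in> Basis" using nonempty_Basis by blast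
      have "(1::nat) \<in> {1..m}" using m2 by simp
      then have "0 \<le> f 1 bb - f 1 0 - gf 1 0 \<bullet> (bb - 0) \<and> f 1 bb - f 1 0 - gf 1 0 \<bullet> (bb - 0) \<le> l / 2 * (norm (bb - 0))\<^sup>2"
        using sm by blast
      then have "0 \<le> l / 2 * (norm (bb - 0))\<^sup>2" by linarith
      then show ?thesis using bb by simp
    qed
    have cvx: "\<forall>i\<in>{1..m}. \<forall>a b. f i a + gf i a \<bullet> (b - a) \<le> f i b"
    proof (intro ballI allI)
      fix i a b assume "i \<in> {1..m}"
      then have "0 \<le> f i b - f i a - gf i a \<bullet> (b - a)" using sm by blast
      then show "f i a + gf i a \<bullet> (b - a) \<le> f i b" by linarith
    qed
    have xsX: "\<forall>i\<in>{1..m}. xs i \<in> X" and xsA: "\<forall>i\<in>{1..m}. lap_apply m E xs i = 0"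
      using opt unfolding is_opt_sol_def by auto
    have main: "\<exists>\<epsilon>0>0. \<forall>\<epsilon>. 0 < \<epsilon> \<and> \<epsilon> < \<epsilon>0 \<longrightarrow>
         (\<exists>N::nat. N \<ge> 1 \<and> real (2 * N) \<le> 8 * ?Ln * ?D / \<epsilon> \<and>
           (\<forall>x y Z S.
              dcgs_run m E f gf X N (\<lambda>k. 1) (\<lambda>k. ?Ln) (\<lambda>k. 2 * ?Ln)
                 (\<lambda>k i. ?Ln * ?D / (real m * real N)) ls x0 y0 x y Z S
              \<longrightarrow>
              dcgs_cg_terminates m E gf N (\<lambda>k. 2 * ?Ln) (\<lambda>k i. ?Ln * ?D / (real m * real N)) x y Z S \<and>
              Ftot m f (dcgs_output N (\<lambda>k. 1) x) - Ftot m f xs \<le> \<epsilon> \<and>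
              (\<forall>i\<in>{1..m}. real (dcgs_lo_calls m E (gf i) i N (\<lambda>k. 2 * ?Ln)
                                   (\<lambda>k i. ?Ln * ?D / (real m * real N)) x y Z S)
                 \<le> (256 * B + 20) * real m * ?Ln * (l + ?Ln) * ?D / \<epsilon>\<^sup>2)))"
      apply (rule exI[where x="min (?Ln * ?D) ?Ln"])
      apply (rule conjI, use Lpos Dpos in simp)
      apply (intro allI impI)
    proof -
      fix \<epsilon> :: real
      assume ep: "0 < \<epsilon> \<and> \<epsilon> < min (?Ln * ?D) ?Ln"
      have ep0: "0 < \<epsilon>" and epLD: "\<epsilon> \<le> ?Ln * ?D" and epL: "\<epsilon> \<le> ?Ln" using ep by auto
      define N where "N = nat \<lceil>3 * ?Ln * ?D / \<epsilon>\<rceil>"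
      have q0: "0 < 3 * ?Ln * ?D / \<epsilon>" using Lpos Dpos ep0 by simp
      have NR: "3 * ?Ln * ?D / \<epsilon> \<le> real N" unfolding N_def by linarith
      have NU: "real N \<le> 3 * ?Ln * ?D / \<epsilon> + 1" unfolding N_def using q0 by linarith
      have N1: "N \<ge> 1" using NR q0 by simp
      have ge1: "1 \<le> ?Ln * ?D / \<epsilon>" using epLD ep0 by simp
      have NL4: "real N \<le> 4 * ?Ln * ?D / \<epsilon>" using NU ge1 by simp
      show "\<exists>N::nat. N \<ge> 1 \<and> real (2 * N) \<le> 8 * ?Ln * ?D / \<epsilon> \<and>
           (\<forall>x y Z S.
              dcgs_run m E f gf X N (\<lambda>k. 1) (\<lambda>k. ?Ln) (\<lambda>k. 2 * ?Ln)
                 (\<lambda>k i. ?Ln * ?D / (real m * real N)) ls x0 y0 x y Z S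
              \<longrightarrow>
              dcgs_cg_terminates m E gf N (\<lambda>k. 2 * ?Ln) (\<lambda>k i. ?Ln * ?D / (real m * real N)) x y Z S \<and>
              Ftot m f (dcgs_output N (\<lambda>k. 1) x) - Ftot m f xs \<le> \<epsilon> \<and>
              (\<forall>i\<in>{1..m}. real (dcgs_lo_calls m E (gf i) i N (\<lambda>k. 2 * ?Ln)
                                   (\<lambda>k i. ?Ln * ?D / (real m * real N)) x y Z S)
                 \<le> (256 * B + 20) * real m * ?Ln * (l + ?Ln) * ?D / \<epsilon>\<^sup>2))"
        apply (rule exI[where x=N])
        apply (rule conjI, rule N1)
        apply (rule conjI, use NL4 in simp)
        apply (intro allI impI)
      proof -
        fix x y Z S
        assume run: "dcgs_run m E f gf X N (\<lambda>k. 1) (\<lambda>k. ?Ln) (\<lambda>k. 2 * ?Ln)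
                 (\<lambda>k i. ?Ln * ?D / (real m * real N)) ls x0 y0 x y Z S"
        define e where "e = ?Ln * ?D / (real m * real N)"
        have epos: "0 < e" unfolding e_def using Lpos Dpos m2 N1 by simp
        have x0e: "x 0 = x0" and y0e: "y 0 = y0"
          and dual: "\<forall>k\<in>{1..N}. \<forall>i\<in>{1..m}. y k i = y (k - 1) i + (1 / ?Ln) *\<^sub>R lap_apply m E (dcgs_xt 1 x k) i"
          and trace: "\<forall>k\<in>{1..N}. \<forall>i\<in>{1..m}. cg_trace (f i) (gf i) X (x (k - 1) i) (dcgs_w m E y k i) (2 * ?Ln) ls (Z k i) (S k i)"
          and xk: "\<forall>k\<in>{1..N}. \<forall>i\<in>{1..m}. x k i = Z k i (cg_stop (gf i) (x (k - 1) i) (dcgs_w m E y k i) (2 * ?Ln) e (Z k i) (S k i))"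
          using run unfolding dcgs_run_def e_def by auto
        define Kc where "Kc = nat \<lceil>4 * ((l + 2 * ?Ln) * B) / e\<rceil> + 1"
        have FW: "\<exists>t \<le> 2 * Kc. cg_gap (gf i) (x (k - 1) i) (dcgs_w m E y k i) (2 * ?Ln) (Z k i t) (S k i t) \<le> e"
          if k: "k \<in> {1..N}" and i: "i \<in> {1..m}" for k i
          unfolding Kc_def
        proof (rule fw_bound[OF assms(1) assms(2)])
          show "\<forall>x. (f i has_derivative (\<lambda>h. gf i x \<bullet> h)) (at x)" using der i by blast
          show "\<forall>x y. 0 \<le> f i y - f i x - gf i x \<bullet> (y - x) \<and> f i y - f i x - gf i x \<bullet> (y - x) \<le> l / 2 * (norm (y - x))\<^sup>2"
            using sm i by blast
          show "0 \<le> l" by (rule l0)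
          show "0 \<le> 2 * ?Ln" using Lpos by simp
          show "\<forall>a\<in>X. \<forall>b\<in>X. (norm (a - b))\<^sup>2 \<le> B" by (rule Bb)
          show "0 < e" by (rule epos)
          show "cg_trace (f i) (gf i) X (x (k - 1) i) (dcgs_w m E y k i) (2 * ?Ln) ls (Z k i) (S k i)"
            using trace k i by blast
        qed
        define stp where "stp = (\<lambda>k i. cg_stop (gf i) (x (k - 1) i) (dcgs_w m E y k i) (2 * ?Ln) e (Z k i) (S k i))"
        have stp_le: "stp k i \<le> 2 * Kc" and stp_gap: "cg_gap (gf i) (x (k - 1) i) (dcgs_w m E y k i) (2 * ?Ln) (Z k i (stp k i)) (S k i (stp k i)) \<le> e"
          if k: "k \<in> {1..N}" and i: "i \<in> {1..m}" for k i
        proof -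
          obtain t where t: "t \<le> 2 * Kc" "cg_gap (gf i) (x (k - 1) i) (dcgs_w m E y k i) (2 * ?Ln) (Z k i t) (S k i t) \<le> e"
            using FW[OF k i] by blast
          show "stp k i \<le> 2 * Kc" unfolding stp_def cg_stop_def using Least_le[of _ t] t by (meson order_trans)
          show "cg_gap (gf i) (x (k - 1) i) (dcgs_w m E y k i) (2 * ?Ln) (Z k i (stp k i)) (S k i (stp k i)) \<le> e"
            unfolding stp_def cg_stop_def by (rule LeastI[of _ t]) (rule t(2))
        qed
        show "dcgs_cg_terminates m E gf N (\<lambda>k. 2 * ?Ln) (\<lambda>k i. ?Ln * ?D / (real m * real N)) x y Z S \<and>
              Ftot m f (dcgs_output N (\<lambda>k. 1) x) - Ftot m f xs \<le> \<epsilon> \<and>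
              (\<forall>i\<in>{1..m}. real (dcgs_lo_calls m E (gf i) i N (\<lambda>k. 2 * ?Ln)
                                   (\<lambda>k i. ?Ln * ?D / (real m * real N)) x y Z S)
                 \<le> (256 * B + 20) * real m * ?Ln * (l + ?Ln) * ?D / \<epsilon>\<^sup>2)"
        proof (intro conjI)
          show "dcgs_cg_terminates m E gf N (\<lambda>k. 2 * ?Ln) (\<lambda>k i. ?Ln * ?D / (real m * real N)) x y Z S"
            unfolding dcgs_cg_terminates_def e_def[symmetric] using FW by blast
          show "Ftot m f (dcgs_output N (\<lambda>k. 1) x) - Ftot m f xs \<le> \<epsilon>"
          proof -
            have gapc: "\<forall>k\<in>{1..N}. \<forall>i\<in>{1..m}. cg_grad (gf i) (x (k - 1) i) (lap_apply m E (y k) i) (2 * ?Ln) (x k i) \<bullet> (x k i - xs i) \<le> e"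
            proof (intro ballI)
              fix k i assume k: "k \<in> {1..N}" and i: "i \<in> {1..m}"
              define G where "G = cg_grad (gf i) (x (k - 1) i) (dcgs_w m E y k i) (2 * ?Ln)"
              have lo: "lin_oracle X (G (Z k i (stp k i))) (S k i (stp k i))"
                using trace k i unfolding cg_trace_def Let_def G_def by blast
              have sle: "G (Z k i (stp k i)) \<bullet> S k i (stp k i) \<le> G (Z k i (stp k i)) \<bullet> xs i"
                using lo xsX i unfolding lin_oracle_def by blast
              have xki: "x k i = Z k i (stp k i)" using xk k i unfolding stp_def by blast
              have "G (x k i) \<bullet> (x k i - xs i) \<le> G (x k i) \<bullet> (x k i - S k i (stp k i))"
                using sle unfolding xki by (simp add: inner_diff_right)
              also have "\<dots> \<le> e" using stp_gap[OF k i] unfolding cg_gap_def G_def xki .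
              finally show "cg_grad (gf i) (x (k - 1) i) (lap_apply m E (y k) i) (2 * ?Ln) (x k i) \<bullet> (x k i - xs i) \<le> e"
                unfolding G_def dcgs_w_def .
            qed
            have pd: "(\<Sum>k=1..N. (Ftot m f (x k) - Ftot m f xs)) \<le> real N * (real m * e)
                + ?Ln * ip m (\<lambda>i. x 0 i - xs i) (\<lambda>i. x 0 i - xs i) + ?Ln / 2 * ip m (y 0) (y 0)"
              by (rule pd_sum[OF symE Lpos cvx xsA dual gapc])
            have Nme: "real N * (real m * e) = ?Ln * ?D" unfolding e_def using m2 N1 by simp
            have a0: "ip m (\<lambda>i. x 0 i - xs i) (\<lambda>i. x 0 i - xs i) \<le> ?D"
              unfolding x0e snorm_sq[symmetric] by simp
            have b0: "ip m (y 0) (y 0) \<le> ?D" unfolding y0e snorm_sq[symmetric] by simp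
            have "?Ln * ip m (\<lambda>i. x 0 i - xs i) (\<lambda>i. x 0 i - xs i) \<le> ?Ln * ?D"
              by (rule mult_left_mono[OF a0]) (use Lpos in simp)
            moreover have "?Ln / 2 * ip m (y 0) (y 0) \<le> ?Ln / 2 * ?D"
              by (rule mult_left_mono[OF b0]) (use Lpos in simp)
            ultimately have sumb: "(\<Sum>k=1..N. (Ftot m f (x k) - Ftot m f xs)) \<le> 5 / 2 * (?Ln * ?D)"
              using pd Nme by linarith
            have jen: "Ftot m f (dcgs_output N (\<lambda>k. 1) x) \<le> (1 / real N) * (\<Sum>k=1..N. Ftot m f (x k))"
              by (rule jensen_F[OF N1 cvx])
            have Npos: "real N > 0" using N1 by simp
            have "(1 / real N) * (\<Sum>k=1..N. Ftot m f (x k)) - Ftot m f xs = (1 / real N) * (\<Sum>k=1..N. (Ftot m f (x k) - Ftot m f xs))"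
              using Npos by (simp add: sum_subtractf field_simps)
            also have "\<dots> \<le> (1 / real N) * (5 / 2 * (?Ln * ?D))"
              by (rule mult_left_mono[OF sumb]) simp
            also have "\<dots> \<le> \<epsilon>"
            proof -
              have "3 * ?Ln * ?D \<le> \<epsilon> * real N" using NR ep0 by (simp add: field_simps)
              moreover have "3 * ?Ln * ?D = 3 * (?Ln * ?D)" by simp
              moreover have "0 < ?Ln * ?D" using Lpos Dpos by simp
              ultimately have "5 / 2 * (?Ln * ?D) \<le> \<epsilon> * real N" by linarith
              then show ?thesis using Npos by (simp add: field_simps)
            qed
            finally show ?thesis using jen by linarith
          qed
          show "\<forall>i\<in>{1..m}. real (dcgs_lo_calls m E (gf i) i N (\<lambda>k. 2 * ?Ln)
                                   (\<lambda>k i. ?Ln * ?D / (real m * real N)) x y Z S)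
                 \<le> (256 * B + 20) * real m * ?Ln * (l + ?Ln) * ?D / \<epsilon>\<^sup>2"
          proof (intro ballI)
            fix i assume i: "i \<in> {1..m}"
            define C where "C = (l + 2 * ?Ln) * B"
            have C0: "0 \<le> C" unfolding C_def using l0 Lpos B0 by simp
            have "dcgs_lo_calls m E (gf i) i N (\<lambda>k. 2 * ?Ln) (\<lambda>k i. ?Ln * ?D / (real m * real N)) x y Z S
                  = (\<Sum>k=1..N. Suc (stp k i))"
              unfolding dcgs_lo_calls_def stp_def e_def by simp
            then have "real (dcgs_lo_calls m E (gf i) i N (\<lambda>k. 2 * ?Ln) (\<lambda>k i. ?Ln * ?D / (real m * real N)) x y Z S)
                  = (\<Sum>k=1..N. real (Suc (stp k i)))" by simp
            also have "\<dots> \<le> (\<Sum>k=1..N. real (2 * Kc + 1))"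
            proof (rule sum_mono)
              fix k assume "k \<in> {1..N}"
              then have "stp k i \<le> 2 * Kc" using stp_le i by blast
              then have "Suc (stp k i) \<le> 2 * Kc + 1" by simp
              then show "real (Suc (stp k i)) \<le> real (2 * Kc + 1)" by (simp only: of_nat_le_iff)
            qed
            also have "\<dots> = real N * real (2 * Kc + 1)" by simp
            also have "\<dots> \<le> real N * (8 * C / e + 5)"
            proof (rule mult_left_mono)
              have q: "0 \<le> 4 * C / e" using C0 epos by simp
              have "real (nat \<lceil>4 * C / e\<rceil>) \<le> 4 * C / e + 1" using q by linarith
              then show "real (2 * Kc + 1) \<le> 8 * C / e + 5" unfolding Kc_def C_def[symmetric] by simp
            qed simp
            also have "\<dots> \<le> (256 * B + 20) * real m * ?Ln * (l + ?Ln) * ?D / \<epsilon>\<^sup>2"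
              unfolding C_def e_def
              by (rule lo_arith) (use Lpos Dpos ep0 l0 B0 m2 N1 NL4 epL in simp_all)
            finally show "real (dcgs_lo_calls m E (gf i) i N (\<lambda>k. 2 * ?Ln) (\<lambda>k i. ?Ln * ?D / (real m * real N)) x y Z S)
                 \<le> (256 * B + 20) * real m * ?Ln * (l + ?Ln) * ?D / \<epsilon>\<^sup>2" .
          qed
        qed
      qed
    qed
    show "let Ln = lap_norm m E; D = max ((snorm m (\<lambda>i. x0 i - xs i))\<^sup>2) ((snorm m y0)\<^sup>2) in
       \<exists>\<epsilon>0>0. \<forall>\<epsilon>. 0 < \<epsilon> \<and> \<epsilon> < \<epsilon>0 \<longrightarrow>
         (\<exists>N::nat. N \<ge> 1 \<and> real (2 * N) \<le> 8 * Ln * D / \<epsilon> \<and>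
           (\<forall>x y Z S.
              dcgs_run m E f gf X N (\<lambda>k. 1) (\<lambda>k. Ln) (\<lambda>k. 2 * Ln)
                 (\<lambda>k i. Ln * D / (real m * real N)) ls x0 y0 x y Z S
              \<longrightarrow>
              dcgs_cg_terminates m E gf N (\<lambda>k. 2 * Ln) (\<lambda>k i. Ln * D / (real m * real N)) x y Z S \<and>
              Ftot m f (dcgs_output N (\<lambda>k. 1) x) - Ftot m f xs \<le> \<epsilon> \<and>
              (\<forall>i\<in>{1..m}. real (dcgs_lo_calls m E (gf i) i N (\<lambda>k. 2 * Ln)
                                   (\<lambda>k i. Ln * D / (real m * real N)) x y Z S)
                 \<le> (256 * B + 20) * real m * Ln * (l + Ln) * D / \<epsilon>\<^sup>2)))"
      unfolding Let_def by (rule main)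
  qed
qed

end
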